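(* For an arbitrary finite set $\Theta$ of pairwise commuting Pauli operators, there exist two regular sets $\Theta'$ and $\Theta''$ of Pauli operators such that $\Theta'\cup\Theta''$ generates the same group as $\Theta$, i.e. $\langle\Theta'\cup\Theta''\rangle=\langle\Theta\rangle$.
   Context: Every Pauli operator $\sigma$ (with phase) on a set of qubits can be written uniquely as $\sigma=\nu\sigma_X\sigma_Z$ with $\nu\in\{\pm1,\pm i\}$, $\sigma_X$ a tensor product of Pauli $X$ and identity factors, and $\sigma_Z$ a tensor product of Pauli $Z$ and identity factors. A set $\{\sigma_1,\dots,\sigma_q\}$ of Pauli operators is regular if $\sigma_{X,i}$ commutes with $\sigma_{Z,j}$ for all $i\neq j$. *)

theory Defs
  imports "HOL-Algebra.Group" "HOL-Algebra.Generated_Groups"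
begin

text \<open>A Pauli operator on the qubits 0..n-1, written in the normal form
  nu * sigma_X * sigma_Z of the paper, is represented by a triple (k, A, B):
  nu = i^k (k < 4), sigma_X = tensor product of X on the qubits in A (identity
  elsewhere), sigma_Z = tensor product of Z on the qubits in B.\<close>

type_synonym pauli = "nat \<times> nat set \<times> nat set"

definition symdiff :: "nat set \<Rightarrow> nat set \<Rightarrow> nat set" where
  "symdiff A B = (A - B) \<union> (B - A)"

text \<open>Operator product: (i^k X^a Z^b)(i^l X^c Z^d) = i^(k+l) (-1)^|b \<inter> c| X^(a+c) Z^(b+d).\<close>
definition pauli_mult :: "pauli \<Rightarrow> pauli \<Rightarrow> pauli" where
  "pauli_mult p q = (case p of (k, a, b) \<Rightarrow> case q of (l, c, d) \<Rightarrow>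
      ((k + l + 2 * card (b \<inter> c)) mod 4, symdiff a c, symdiff b d))"

definition pauli_group :: "nat \<Rightarrow> pauli monoid" where
  "pauli_group n = \<lparr>carrier = {(k, a, b). k < 4 \<and> a \<subseteq> {..<n} \<and> b \<subseteq> {..<n}},
                     mult = pauli_mult, one = (0, {}, {})\<rparr>"

definition pauli_X :: "pauli \<Rightarrow> pauli" where
  "pauli_X p = (case p of (k, a, b) \<Rightarrow> (0, a, {}))"

definition pauli_Z :: "pauli \<Rightarrow> pauli" where
  "pauli_Z p = (case p of (k, a, b) \<Rightarrow> (0, {}, b))"

definition pauli_commute :: "pauli \<Rightarrow> pauli \<Rightarrow> bool" where
  "pauli_commute p q \<longleftrightarrow> pauli_mult p q = pauli_mult q p"

definition regular :: "pauli set \<Rightarrow> bool" where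
  "regular S \<longleftrightarrow> (\<forall>\<sigma>\<in>S. \<forall>\<tau>\<in>S. \<sigma> \<noteq> \<tau> \<longrightarrow> pauli_commute (pauli_X \<sigma>) (pauli_Z \<tau>))"

end

theory Submission
  imports Defs
begin

lemma symdiff_simps[simp]:
  "symdiff a {} = a" "symdiff {} a = a" "symdiff a a = {}"
  unfolding symdiff_def by auto

lemma symdiff_comm: "symdiff a b = symdiff b a"
  unfolding symdiff_def by auto

lemma symdiff_assoc: "symdiff (symdiff a b) c = symdiff a (symdiff b c)"
  unfolding symdiff_def by auto

lemma symdiff_empty_iff: "symdiff a b = {} \<longleftrightarrow> a = b"
  unfolding symdiff_def by auto

lemma card_symdiff_int:
  assumes "finite c"
  shows "card (symdiff a b \<inter> c) + 2 * card (a \<inter> b \<inter> c) = card (a \<inter> c) + card (b \<inter> c)"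
proof -
  have f: "finite (a \<inter> c)" "finite (b \<inter> c)" using assms by auto
  have u: "card ((a \<inter> c) \<union> (b \<inter> c)) + card ((a \<inter> c) \<inter> (b \<inter> c)) = card (a \<inter> c) + card (b \<inter> c)"
    using card_Un_Int[OF f] by simp
  have e1: "(a \<inter> c) \<union> (b \<inter> c) = (symdiff a b \<inter> c) \<union> (a \<inter> b \<inter> c)"
    unfolding symdiff_def by auto
  have d: "(symdiff a b \<inter> c) \<inter> (a \<inter> b \<inter> c) = {}" unfolding symdiff_def by auto
  have "card ((a \<inter> c) \<union> (b \<inter> c)) = card (symdiff a b \<inter> c) + card (a \<inter> b \<inter> c)"
    unfolding e1 using d assms by (intro card_Un_disjoint) auto
  moreover have "(a \<inter> c) \<inter> (b \<inter> c) = a \<inter> b \<inter> c" by auto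
  ultimately show ?thesis using u by simp
qed

lemma mod4_shift:
  assumes "X + 2 * t = P"
  shows "(A + 2 * X) mod 4 = (A + 2 * (P::nat)) mod 4"
proof -
  have "A + 2 * P = (A + 2 * X) + 4 * t" using assms by simp
  moreover have "(A + 2 * X + 4 * t) mod 4 = (A + 2 * X) mod 4"
    by (metis mod_mult_self2 mult.commute)
  ultimately show ?thesis by (simp add: add.assoc)
qed

lemma mod4_inv: "(((4::nat) - (k + 2 * c) mod 4) mod 4 + (k + 2 * c)) mod 4 = 0"
proof -
  have "(k+2*c) mod 4 < 4" by simp
  then show ?thesis by (metis add.commute le_add_diff_inverse2 less_imp_le mod_add_left_eq mod_add_right_eq mod_self add.assoc)
qed

lemma carrier_iff: "(k, a, b) \<in> carrier (pauli_group n) \<longleftrightarrow> k < 4 \<and> a \<subseteq> {..<n} \<and> b \<subseteq> {..<n}"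
  by (simp add: pauli_group_def)

lemma mult_eq: "(k, a, b) \<otimes>\<^bsub>pauli_group n\<^esub> (l, c, d) = ((k + l + 2 * card (b \<inter> c)) mod 4, symdiff a c, symdiff b d)"
  by (simp add: pauli_group_def pauli_mult_def)

lemma one_eq: "\<one>\<^bsub>pauli_group n\<^esub> = (0, {}, {})"
  by (simp add: pauli_group_def)

lemma symdiff_sub: "a \<subseteq> A \<Longrightarrow> c \<subseteq> A \<Longrightarrow> symdiff a c \<subseteq> A"
  unfolding symdiff_def by blast

lemma pauli_group_group: "group (pauli_group n)"
proof (rule groupI)
  fix x y assume "x \<in> carrier (pauli_group n)" "y \<in> carrier (pauli_group n)"
  moreover obtain k a b l c d where "x = (k, a, b)" "y = (l, c, d)" by (metis prod_cases3)
  ultimately show "x \<otimes>\<^bsub>pauli_group n\<^esub> y \<in> carrier (pauli_group n)"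
    by (simp add: carrier_iff mult_eq symdiff_sub)
next
  show "\<one>\<^bsub>pauli_group n\<^esub> \<in> carrier (pauli_group n)" by (simp add: one_eq carrier_iff)
next
  fix x assume "x \<in> carrier (pauli_group n)"
  moreover obtain k a b where "x = (k, a, b)" by (metis prod_cases3)
  ultimately show "\<one>\<^bsub>pauli_group n\<^esub> \<otimes>\<^bsub>pauli_group n\<^esub> x = x"
    by (simp add: one_eq mult_eq carrier_iff)
next
  fix x assume xc: "x \<in> carrier (pauli_group n)"
  obtain k a b where x: "x = (k, a, b)" by (metis prod_cases3)
  define l where "l = (4 - (k + 2 * card (b \<inter> a)) mod 4) mod 4"
  have "(l + k + 2 * card (b \<inter> a)) mod 4 = 0" unfolding l_def
    using mod4_inv[of k "card (b \<inter> a)"] by (simp only: add.assoc)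
  moreover have "l < 4" unfolding l_def by simp
  ultimately show "\<exists>y\<in>carrier (pauli_group n). y \<otimes>\<^bsub>pauli_group n\<^esub> x = \<one>\<^bsub>pauli_group n\<^esub>"
    using xc unfolding x by (intro bexI[of _ "(l, a, b)"]) (simp_all add: mult_eq one_eq carrier_iff)
next
  fix x y z assume xc: "x \<in> carrier (pauli_group n)" and yc: "y \<in> carrier (pauli_group n)"
    and zc: "z \<in> carrier (pauli_group n)"
  obtain k a b where x: "x = (k, a, b)" by (metis prod_cases3)
  obtain l c d where y: "y = (l, c, d)" by (metis prod_cases3)
  obtain m e f where z: "z = (m, e, f)" by (metis prod_cases3)
  have fin: "finite b" "finite e"
    using xc zc unfolding x z carrier_iff by (auto intro: finite_subset)
  have h1: "card (symdiff b d \<inter> e) + 2 * card (b \<inter> d \<inter> e) = card (b \<inter> e) + card (d \<inter> e)"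
    by (rule card_symdiff_int[OF fin(2)])
  have h2: "card (symdiff c e \<inter> b) + 2 * card (c \<inter> e \<inter> b) = card (c \<inter> b) + card (e \<inter> b)"
    by (rule card_symdiff_int[OF fin(1)])
  have i2: "b \<inter> symdiff c e = symdiff c e \<inter> b" "c \<inter> b = b \<inter> c" "e \<inter> b = b \<inter> e" by auto
  define K where "K = card (b \<inter> c)"
  define E where "E = card (b \<inter> e)"
  define D where "D = card (d \<inter> e)"
  have L: "((k + l + 2 * K) mod 4 + m + 2 * card (symdiff b d \<inter> e)) mod 4
     = (k + l + m + 2 * K + 2 * E + 2 * D) mod 4"
  proof -
    have "((k + l + 2 * K) mod 4 + m + 2 * card (symdiff b d \<inter> e)) mod 4
        = ((k + l + 2 * K) + m + 2 * card (symdiff b d \<inter> e)) mod 4"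
      by (metis mod_add_left_eq)
    also have "\<dots> = ((k + l + 2 * K + m) + 2 * (E + D)) mod 4"
      using mod4_shift[OF h1, of "k + l + 2 * K + m"] unfolding E_def D_def by simp
    finally show ?thesis by (simp add: algebra_simps)
  qed
  have R: "(k + (l + m + 2 * D) mod 4 + 2 * card (b \<inter> symdiff c e)) mod 4
     = (k + l + m + 2 * K + 2 * E + 2 * D) mod 4"
  proof -
    have "(k + (l + m + 2 * D) mod 4 + 2 * card (b \<inter> symdiff c e)) mod 4
        = (k + (l + m + 2 * D) + 2 * card (symdiff c e \<inter> b)) mod 4"
      by (metis mod_add_left_eq mod_add_right_eq i2(1))
    also have "\<dots> = ((k + l + m + 2 * D) + 2 * (K + E)) mod 4"
      using mod4_shift[OF h2, of "k + l + m + 2 * D"] i2 unfolding K_def E_def by (simp add: add.assoc)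
    finally show ?thesis by (simp add: algebra_simps)
  qed
  show "x \<otimes>\<^bsub>pauli_group n\<^esub> y \<otimes>\<^bsub>pauli_group n\<^esub> z = x \<otimes>\<^bsub>pauli_group n\<^esub> (y \<otimes>\<^bsub>pauli_group n\<^esub> z)"
    unfolding x y z mult_eq using L R unfolding K_def D_def by (simp add: symdiff_assoc)
qed


lemma mod4_even: "((m::nat) + 2 * u) mod 4 = (m + 2 * v) mod 4 \<longleftrightarrow> (even u \<longleftrightarrow> even v)"
  by presburger

definition ev :: "pauli \<Rightarrow> pauli \<Rightarrow> bool" where
  "ev p q \<longleftrightarrow> even (card (snd (snd q) \<inter> fst (snd p)))"

lemma mult_parts: "fst (snd (x \<otimes>\<^bsub>pauli_group n\<^esub> y)) = symdiff (fst (snd x)) (fst (snd y))"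
  "snd (snd (x \<otimes>\<^bsub>pauli_group n\<^esub> y)) = symdiff (snd (snd x)) (snd (snd y))"
  by (cases x; cases y; simp add: mult_eq)+

lemma carrier_fin: "x \<in> carrier (pauli_group n) \<Longrightarrow> finite (fst (snd x)) \<and> finite (snd (snd x))"
  by (cases x) (auto simp: carrier_iff intro: finite_subset)

lemma inv_parts:
  assumes "x \<in> carrier (pauli_group n)"
  shows "fst (snd (inv\<^bsub>pauli_group n\<^esub> x)) = fst (snd x)" "snd (snd (inv\<^bsub>pauli_group n\<^esub> x)) = snd (snd x)"
proof -
  interpret group "pauli_group n" by (rule pauli_group_group)
  have "inv\<^bsub>pauli_group n\<^esub> x \<otimes>\<^bsub>pauli_group n\<^esub> x = \<one>\<^bsub>pauli_group n\<^esub>" using assms by simp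
  then have "symdiff (fst (snd (inv\<^bsub>pauli_group n\<^esub> x))) (fst (snd x)) = {}"
     "symdiff (snd (snd (inv\<^bsub>pauli_group n\<^esub> x))) (snd (snd x)) = {}"
    by (metis mult_parts one_eq fst_conv snd_conv)+
  then show "fst (snd (inv\<^bsub>pauli_group n\<^esub> x)) = fst (snd x)" "snd (snd (inv\<^bsub>pauli_group n\<^esub> x)) = snd (snd x)"
    by (simp_all add: symdiff_empty_iff)
qed

lemma parity_symdiff:
  assumes "finite c"
  shows "even (card (symdiff a b \<inter> c)) \<longleftrightarrow> (even (card (a \<inter> c)) \<longleftrightarrow> even (card (b \<inter> c)))"
proof -
  have "card (symdiff a b \<inter> c) + 2 * card (a \<inter> b \<inter> c) = card (a \<inter> c) + card (b \<inter> c)"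
    by (rule card_symdiff_int[OF assms])
  then have "even (card (symdiff a b \<inter> c)) \<longleftrightarrow> even (card (a \<inter> c) + card (b \<inter> c))"
    by (metis even_add even_mult_iff even_numeral)
  then show ?thesis by simp
qed

lemma ev_mult1: "finite (snd (snd q)) \<Longrightarrow> ev (x \<otimes>\<^bsub>pauli_group n\<^esub> y) q \<longleftrightarrow> (ev x q \<longleftrightarrow> ev y q)"
  unfolding ev_def mult_parts by (metis Int_commute parity_symdiff)

lemma ev_mult2: "finite (fst (snd p)) \<Longrightarrow> ev p (x \<otimes>\<^bsub>pauli_group n\<^esub> y) \<longleftrightarrow> (ev p x \<longleftrightarrow> ev p y)"
  unfolding ev_def mult_parts by (metis parity_symdiff)

lemma ev_inv: "x \<in> carrier (pauli_group n) \<Longrightarrow> ev (inv\<^bsub>pauli_group n\<^esub> x) q = ev x q"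
   "x \<in> carrier (pauli_group n) \<Longrightarrow> ev q (inv\<^bsub>pauli_group n\<^esub> x) = ev q x"
  unfolding ev_def by (simp_all add: inv_parts)

lemma ev_one: "ev \<one>\<^bsub>pauli_group n\<^esub> q" "ev q \<one>\<^bsub>pauli_group n\<^esub>"
  unfolding ev_def one_eq by simp_all

lemma commute_iff: "pauli_commute p q \<longleftrightarrow> (ev q p \<longleftrightarrow> ev p q)"
proof -
  obtain k a b where p: "p = (k, a, b)" by (metis prod_cases3)
  obtain l c d where q: "q = (l, c, d)" by (metis prod_cases3)
  have "pauli_commute p q \<longleftrightarrow> (k + l + 2 * card (b \<inter> c)) mod 4 = (l + k + 2 * card (d \<inter> a)) mod 4"
    unfolding pauli_commute_def p q pauli_mult_def by (simp add: symdiff_comm)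
  also have "\<dots> \<longleftrightarrow> (even (card (b \<inter> c)) \<longleftrightarrow> even (card (d \<inter> a)))"
    using mod4_even[of "k + l"] by (simp add: add.commute)
  finally show ?thesis unfolding ev_def p q by simp
qed

lemma regular_iff: "regular S \<longleftrightarrow> (\<forall>x\<in>S. \<forall>y\<in>S. x \<noteq> y \<longrightarrow> ev x y)"
proof -
  have "pauli_commute (pauli_X x) (pauli_Z y) \<longleftrightarrow> ev x y" for x y
    unfolding commute_iff by (cases x; cases y) (simp add: ev_def pauli_X_def pauli_Z_def)
  then show ?thesis unfolding regular_def by simp
qed

lemma gen_closed:
  assumes "S \<subseteq> carrier (pauli_group n)" "P \<one>\<^bsub>pauli_group n\<^esub>"
    "\<And>x y. P x \<Longrightarrow> P y \<Longrightarrow> P (x \<otimes>\<^bsub>pauli_group n\<^esub> y)"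
    "\<And>s. s \<in> S \<Longrightarrow> P s" "\<And>s. s \<in> S \<Longrightarrow> P (inv\<^bsub>pauli_group n\<^esub> s)"
    "x \<in> generate (pauli_group n) S"
  shows "P x"
  using assms(6) by (induction rule: generate.induct) (auto intro: assms)

lemma gen_orth:
  assumes "S \<subseteq> carrier (pauli_group n)" "\<sigma> \<in> carrier (pauli_group n)"
    "\<And>s. s \<in> S \<Longrightarrow> ev s \<sigma> \<and> ev \<sigma> s" "x \<in> generate (pauli_group n) S"
  shows "ev x \<sigma> \<and> ev \<sigma> x"
proof (rule gen_closed[where P = "\<lambda>x. ev x \<sigma> \<and> ev \<sigma> x", OF assms(1) _ _ _ _ assms(4)])
  have f: "finite (fst (snd \<sigma>))" "finite (snd (snd \<sigma>))" using carrier_fin[OF assms(2)] by auto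
  show "ev \<one>\<^bsub>pauli_group n\<^esub> \<sigma> \<and> ev \<sigma> \<one>\<^bsub>pauli_group n\<^esub>" by (simp add: ev_one)
  show "ev (x \<otimes>\<^bsub>pauli_group n\<^esub> y) \<sigma> \<and> ev \<sigma> (x \<otimes>\<^bsub>pauli_group n\<^esub> y)"
    if "ev x \<sigma> \<and> ev \<sigma> x" "ev y \<sigma> \<and> ev \<sigma> y" for x y
    using that by (simp add: ev_mult1[OF f(2)] ev_mult2[OF f(1)])
  show "ev s \<sigma> \<and> ev \<sigma> s" if "s \<in> S" for s using assms(3) that .
  show "ev (inv\<^bsub>pauli_group n\<^esub> s) \<sigma> \<and> ev \<sigma> (inv\<^bsub>pauli_group n\<^esub> s)" if "s \<in> S" for s
  proof -
    have sc: "s \<in> carrier (pauli_group n)" using assms(1) that by blast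
    show ?thesis using assms(3)[OF that] by (simp add: ev_inv[OF sc])
  qed
qed

lemma gen_comm1:
  assumes "S \<subseteq> carrier (pauli_group n)" "y \<in> carrier (pauli_group n)"
    "\<And>s. s \<in> S \<Longrightarrow> pauli_commute s y" "x \<in> generate (pauli_group n) S"
  shows "pauli_commute x y"
  unfolding commute_iff
proof (rule gen_closed[where P = "\<lambda>x. ev y x \<longleftrightarrow> ev x y", OF assms(1) _ _ _ _ assms(4)])
  have f: "finite (fst (snd y))" "finite (snd (snd y))" using carrier_fin[OF assms(2)] by auto
  show "ev y \<one>\<^bsub>pauli_group n\<^esub> \<longleftrightarrow> ev \<one>\<^bsub>pauli_group n\<^esub> y" by (simp add: ev_one)
  show "ev y (x \<otimes>\<^bsub>pauli_group n\<^esub> z) \<longleftrightarrow> ev (x \<otimes>\<^bsub>pauli_group n\<^esub> z) y"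
    if "ev y x \<longleftrightarrow> ev x y" "ev y z \<longleftrightarrow> ev z y" for x z
    using that by (simp add: ev_mult1[OF f(2)] ev_mult2[OF f(1)])
  show "ev y s \<longleftrightarrow> ev s y" if "s \<in> S" for s using assms(3)[OF that] unfolding commute_iff .
  show "ev y (inv\<^bsub>pauli_group n\<^esub> s) \<longleftrightarrow> ev (inv\<^bsub>pauli_group n\<^esub> s) y" if "s \<in> S" for s
  proof -
    have sc: "s \<in> carrier (pauli_group n)" using assms(1) that by blast
    show ?thesis using assms(3)[OF that] unfolding commute_iff by (simp add: ev_inv[OF sc])
  qed
qed

lemma commute_sym: "pauli_commute x y \<Longrightarrow> pauli_commute y x"
  unfolding commute_iff by blast

lemma gen_comm:
  assumes "S \<subseteq> carrier (pauli_group n)" "\<forall>\<sigma>\<in>S. \<forall>\<tau>\<in>S. pauli_commute \<sigma> \<tau>"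
    "x \<in> generate (pauli_group n) S" "y \<in> generate (pauli_group n) S"
  shows "pauli_commute x y"
proof -
  interpret group "pauli_group n" by (rule pauli_group_group)
  have xc: "x \<in> carrier (pauli_group n)" using generate_in_carrier assms by blast
  have "pauli_commute s x" if "s \<in> S" for s
    using gen_comm1[OF assms(1) _ _ assms(3), of s] that assms(1,2) by (auto intro: commute_sym)
  then have "pauli_commute y x"
    using gen_comm1[OF assms(1) xc _ assms(4)] by blast
  then show ?thesis by (rule commute_sym)
qed


lemma gen_eq:
  assumes "A \<subseteq> carrier (pauli_group n)" "B \<subseteq> carrier (pauli_group n)"
    "A \<subseteq> generate (pauli_group n) B" "B \<subseteq> generate (pauli_group n) A"
  shows "generate (pauli_group n) A = generate (pauli_group n) B"
proof -
  interpret group "pauli_group n" by (rule pauli_group_group)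
  show ?thesis
    using generate_subgroup_incl[OF assms(3) generate_is_subgroup[OF assms(2)]]
      generate_subgroup_incl[OF assms(4) generate_is_subgroup[OF assms(1)]] by blast
qed

lemma gen_insert:
  assumes "A \<subseteq> carrier (pauli_group n)" "B \<subseteq> carrier (pauli_group n)" "s \<in> carrier (pauli_group n)"
    "generate (pauli_group n) A = generate (pauli_group n) B"
  shows "generate (pauli_group n) (insert s A) = generate (pauli_group n) (insert s B)"
proof -
  interpret group "pauli_group n" by (rule pauli_group_group)
  have "A \<subseteq> generate (pauli_group n) (insert s B)"
    using generate.incl[of _ A "pauli_group n"] assms(4) mono_generate[of B "insert s B"] by blast
  moreover have "B \<subseteq> generate (pauli_group n) (insert s A)"
    using generate.incl[of _ B "pauli_group n"] assms(4) mono_generate[of A "insert s A"] by blast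
  ultimately show ?thesis using assms
    by (intro gen_eq) (auto intro: generate.incl)
qed

lemma gen_modify:
  assumes "s \<in> carrier (pauli_group n)" "K \<subseteq> carrier (pauli_group n)" "R \<subseteq> carrier (pauli_group n)"
  shows "generate (pauli_group n) (insert s (K \<union> (\<lambda>\<rho>. if P \<rho> then \<rho> \<otimes>\<^bsub>pauli_group n\<^esub> s else \<rho>) ` R))
       = generate (pauli_group n) (insert s (K \<union> R))"
proof -
  interpret group "pauli_group n" by (rule pauli_group_group)
  let ?f = "\<lambda>\<rho>. if P \<rho> then \<rho> \<otimes>\<^bsub>pauli_group n\<^esub> s else \<rho>"
  have fc: "?f ` R \<subseteq> carrier (pauli_group n)" using assms by auto
  have 1: "?f ` R \<subseteq> generate (pauli_group n) (insert s (K \<union> R))"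
  proof
    fix x assume "x \<in> ?f ` R"
    then obtain \<rho> where r: "\<rho> \<in> R" "x = ?f \<rho>" by blast
    have "\<rho> \<in> generate (pauli_group n) (insert s (K \<union> R))" "s \<in> generate (pauli_group n) (insert s (K \<union> R))"
      using r by (auto intro: generate.incl)
    then show "x \<in> generate (pauli_group n) (insert s (K \<union> R))"
      using r(2) generate.eng by (cases "P \<rho>") simp_all
  qed
  have 2: "R \<subseteq> generate (pauli_group n) (insert s (K \<union> ?f ` R))"
  proof
    fix \<rho> assume r: "\<rho> \<in> R"
    have a: "?f \<rho> \<in> generate (pauli_group n) (insert s (K \<union> ?f ` R))"
      using r by (intro generate.incl) blast
    show "\<rho> \<in> generate (pauli_group n) (insert s (K \<union> ?f ` R))"
    proof (cases "P \<rho>")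
      case True
      have rc: "\<rho> \<in> carrier (pauli_group n)" using r assms by auto
      have "\<rho> = (\<rho> \<otimes>\<^bsub>pauli_group n\<^esub> s) \<otimes>\<^bsub>pauli_group n\<^esub> inv\<^bsub>pauli_group n\<^esub> s"
        using m_assoc[OF rc assms(1) inv_closed[OF assms(1)]] r_inv[OF assms(1)] r_one[OF rc] by simp
      moreover have "inv\<^bsub>pauli_group n\<^esub> s \<in> generate (pauli_group n) (insert s (K \<union> ?f ` R))"
        by (rule generate.inv) simp
      ultimately show ?thesis using a True generate.eng by fastforce
    next
      case False then show ?thesis using a by simp
    qed
  qed
  show ?thesis
    using assms fc 1 2 by (intro gen_eq) (auto intro: generate.incl)
qed

lemma reg_extend:
  assumes "R \<subseteq> carrier (pauli_group n)" "T1 \<subseteq> generate (pauli_group n) R"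
    "\<sigma> \<in> carrier (pauli_group n)" "\<And>\<rho>. \<rho> \<in> R \<Longrightarrow> ev \<rho> \<sigma> \<and> ev \<sigma> \<rho>" "regular T1"
  shows "regular (insert \<sigma> T1)"
proof -
  have "ev x \<sigma> \<and> ev \<sigma> x" if "x \<in> T1" for x
    using gen_orth[OF assms(1,3,4)] assms(2) that by blast
  then show ?thesis using assms(5) unfolding regular_iff by auto
qed


lemma main_induct:
  "\<forall>\<Theta>. card \<Theta> = m \<longrightarrow> \<Theta> \<subseteq> carrier (pauli_group n) \<longrightarrow> finite \<Theta>
     \<longrightarrow> (\<forall>\<sigma>\<in>\<Theta>. \<forall>\<tau>\<in>\<Theta>. pauli_commute \<sigma> \<tau>)
     \<longrightarrow> (\<exists>\<Theta>' \<Theta>''. \<Theta>' \<subseteq> carrier (pauli_group n) \<and> \<Theta>'' \<subseteq> carrier (pauli_group n)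
           \<and> finite \<Theta>' \<and> finite \<Theta>'' \<and> regular \<Theta>' \<and> regular \<Theta>''
           \<and> generate (pauli_group n) (\<Theta>' \<union> \<Theta>'') = generate (pauli_group n) \<Theta>)"
proof (induction m rule: less_induct)
  case (less m)
  interpret group "pauli_group n" by (rule pauli_group_group)
  show ?case
  proof (intro allI impI)
    fix \<Theta> assume cardT: "card \<Theta> = m" and sub: "\<Theta> \<subseteq> carrier (pauli_group n)" and fin: "finite \<Theta>"
      and comm: "\<forall>\<sigma>\<in>\<Theta>. \<forall>\<tau>\<in>\<Theta>. pauli_commute \<sigma> \<tau>"
    have gc: "generate (pauli_group n) \<Theta> \<subseteq> carrier (pauli_group n)" by (rule generate_incl[OF sub])
    have gcomm: "\<forall>x\<in>generate (pauli_group n) \<Theta>. \<forall>y\<in>generate (pauli_group n) \<Theta>. pauli_commute x y"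
      using gen_comm[OF sub comm] by blast
    have IH: "\<exists>\<Theta>' \<Theta>''. \<Theta>' \<subseteq> carrier (pauli_group n) \<and> \<Theta>'' \<subseteq> carrier (pauli_group n)
           \<and> finite \<Theta>' \<and> finite \<Theta>'' \<and> regular \<Theta>' \<and> regular \<Theta>''
           \<and> generate (pauli_group n) (\<Theta>' \<union> \<Theta>'') = generate (pauli_group n) R"
      if "finite R" "card R < m" "R \<subseteq> generate (pauli_group n) \<Theta>" for R
    proof -
      have "R \<subseteq> carrier (pauli_group n)" "\<forall>\<sigma>\<in>R. \<forall>\<tau>\<in>R. pauli_commute \<sigma> \<tau>"
        using that(3) gc gcomm by blast+
      then show ?thesis using less.IH[OF that(2)] that(1) by blast
    qed
    have inG: "x \<in> generate (pauli_group n) \<Theta>" if "x \<in> \<Theta>" for x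
      using that by (rule generate.incl)
    consider (C) "\<forall>\<sigma>\<in>\<Theta>. \<forall>\<tau>\<in>\<Theta>. ev \<sigma> \<tau>" | (A) "\<exists>\<sigma>\<in>\<Theta>. \<not> ev \<sigma> \<sigma>"
      | (B) \<sigma> \<tau> where "\<sigma> \<in> \<Theta>" "\<tau> \<in> \<Theta>" "\<not> ev \<sigma> \<tau>" "\<forall>x\<in>\<Theta>. ev x x" by blast
    then show "\<exists>\<Theta>' \<Theta>''. \<Theta>' \<subseteq> carrier (pauli_group n) \<and> \<Theta>'' \<subseteq> carrier (pauli_group n)
           \<and> finite \<Theta>' \<and> finite \<Theta>'' \<and> regular \<Theta>' \<and> regular \<Theta>''
           \<and> generate (pauli_group n) (\<Theta>' \<union> \<Theta>'') = generate (pauli_group n) \<Theta>"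
    proof cases
      case C
      then show ?thesis using sub fin
        by (intro exI[of _ \<Theta>] exI[of _ "{}"]) (simp add: regular_iff)
    next
      case A
      then obtain \<sigma> where sT: "\<sigma> \<in> \<Theta>" "\<not> ev \<sigma> \<sigma>" by blast
      have sc: "\<sigma> \<in> carrier (pauli_group n)" using sT sub by blast
      have fs: "finite (snd (snd \<sigma>))" using carrier_fin[OF sc] by blast
      define rest where "rest = \<Theta> - {\<sigma>}"
      define f where "f = (\<lambda>\<rho>. if \<not> ev \<rho> \<sigma> then \<rho> \<otimes>\<^bsub>pauli_group n\<^esub> \<sigma> else \<rho>)"
      define R where "R = f ` rest"
      have restc: "rest \<subseteq> carrier (pauli_group n)" using sub rest_def by blast
      have genR: "generate (pauli_group n) (insert \<sigma> ({} \<union> R)) = generate (pauli_group n) (insert \<sigma> ({} \<union> rest))"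
        unfolding R_def f_def by (rule gen_modify[OF sc _ restc]) simp
      have Teq: "insert \<sigma> ({} \<union> rest) = \<Theta>" using sT rest_def by auto
      have RG: "R \<subseteq> generate (pauli_group n) \<Theta>"
        using genR Teq generate.incl[of _ "insert \<sigma> ({} \<union> R)" "pauli_group n"] by blast
      have Rc: "R \<subseteq> carrier (pauli_group n)" using RG gc by blast
      have finR: "finite R" unfolding R_def rest_def using fin by simp
      have "card R \<le> card rest" unfolding R_def by (rule card_image_le) (simp add: rest_def fin)
      moreover have "card rest < card \<Theta>" unfolding rest_def
        by (rule card_Diff1_less[OF fin sT(1)])
      ultimately have cardR: "card R < m" using cardT by simp
      obtain T1 T2 where T: "T1 \<subseteq> carrier (pauli_group n)" "T2 \<subseteq> carrier (pauli_group n)"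
           "finite T1" "finite T2" "regular T1" "regular T2"
           "generate (pauli_group n) (T1 \<union> T2) = generate (pauli_group n) R"
        using IH[OF finR cardR RG] by blast
      have orth: "ev \<rho> \<sigma> \<and> ev \<sigma> \<rho>" if rR: "\<rho> \<in> R" for \<rho>
      proof -
        obtain r where r: "r \<in> rest" "\<rho> = f r" using rR R_def by blast
        have e1: "ev \<rho> \<sigma>"
        proof (cases "ev r \<sigma>")
          case True then show ?thesis using r by (simp add: f_def)
        next
          case False then show ?thesis using r sT(2) by (simp add: f_def ev_mult1[OF fs])
        qed
        have "pauli_commute \<rho> \<sigma>" using gcomm RG rR inG[OF sT(1)] by blast
        then show ?thesis using e1 unfolding commute_iff by blast
      qed
      have T1G: "T1 \<subseteq> generate (pauli_group n) R"
        using T(7) generate.incl[of _ "T1 \<union> T2" "pauli_group n"] by blast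
      have reg: "regular (insert \<sigma> T1)" by (rule reg_extend[OF Rc T1G sc orth T(5)])
      have "generate (pauli_group n) (insert \<sigma> T1 \<union> T2) = generate (pauli_group n) (insert \<sigma> (T1 \<union> T2))"
        by simp
      also have "\<dots> = generate (pauli_group n) (insert \<sigma> R)"
        by (rule gen_insert) (use T Rc sc in auto)
      also have "\<dots> = generate (pauli_group n) \<Theta>" using genR Teq by simp
      finally show ?thesis using T reg sc by (intro exI[of _ "insert \<sigma> T1"] exI[of _ T2]) auto
    next
      case B
      note sT = B
      have sc: "\<sigma> \<in> carrier (pauli_group n)" using sT sub by blast
      have tc: "\<tau> \<in> carrier (pauli_group n)" using sT sub by blast
      have fs: "finite (snd (snd \<sigma>))" using carrier_fin[OF sc] by blast
      have ft: "finite (snd (snd \<tau>))" using carrier_fin[OF tc] by blast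
      have ss: "ev \<sigma> \<sigma>" "ev \<tau> \<tau>" using sT by auto
      have neq: "\<sigma> \<noteq> \<tau>" using ss sT(3) by auto
      have ts: "\<not> ev \<tau> \<sigma>" using comm sT(1,2,3) unfolding commute_iff by blast
      define rest where "rest = \<Theta> - {\<sigma>, \<tau>}"
      define g where "g = (\<lambda>\<rho>. if \<not> ev \<rho> \<sigma> then \<rho> \<otimes>\<^bsub>pauli_group n\<^esub> \<tau> else \<rho>)"
      define h where "h = (\<lambda>\<rho>. if \<not> ev \<rho> \<tau> then \<rho> \<otimes>\<^bsub>pauli_group n\<^esub> \<sigma> else \<rho>)"
      define R1 where "R1 = g ` rest"
      define R where "R = h ` R1"
      have restc: "rest \<subseteq> carrier (pauli_group n)" using sub rest_def by blast
      have R1c: "R1 \<subseteq> carrier (pauli_group n)" unfolding R1_def g_def using restc tc by auto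
      have gen1: "generate (pauli_group n) (insert \<tau> ({\<sigma>} \<union> R1)) = generate (pauli_group n) (insert \<tau> ({\<sigma>} \<union> rest))"
        unfolding R1_def g_def by (rule gen_modify[OF tc _ restc]) (use sc in simp)
      have gen2: "generate (pauli_group n) (insert \<sigma> ({\<tau>} \<union> R)) = generate (pauli_group n) (insert \<sigma> ({\<tau>} \<union> R1))"
        unfolding R_def h_def by (rule gen_modify[OF sc _ R1c]) (use tc in simp)
      have e1: "insert \<tau> ({\<sigma>} \<union> rest) = \<Theta>" using sT rest_def by auto
      have e2: "insert \<sigma> ({\<tau>} \<union> R1) = insert \<tau> ({\<sigma>} \<union> R1)" by auto
      have genR: "generate (pauli_group n) (insert \<sigma> ({\<tau>} \<union> R)) = generate (pauli_group n) \<Theta>"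
        using gen1 gen2 e1 e2 by simp
      have RG: "R \<subseteq> generate (pauli_group n) \<Theta>"
        using genR generate.incl[of _ "insert \<sigma> ({\<tau>} \<union> R)" "pauli_group n"] by blast
      have Rc: "R \<subseteq> carrier (pauli_group n)" using RG gc by blast
      have finR: "finite R" unfolding R_def R1_def rest_def using fin by simp
      have "card R \<le> card R1" unfolding R_def by (rule card_image_le) (simp add: R1_def rest_def fin)
      moreover have "card R1 \<le> card rest" unfolding R1_def by (rule card_image_le) (simp add: rest_def fin)
      moreover have "card rest < card \<Theta>" unfolding rest_def
        by (rule psubset_card_mono[OF fin]) (use sT in blast)
      ultimately have cardR: "card R < m" using cardT by simp
      obtain T1 T2 where T: "T1 \<subseteq> carrier (pauli_group n)" "T2 \<subseteq> carrier (pauli_group n)"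
           "finite T1" "finite T2" "regular T1" "regular T2"
           "generate (pauli_group n) (T1 \<union> T2) = generate (pauli_group n) R"
        using IH[OF finR cardR RG] by blast
      have orth0: "ev \<rho> \<sigma> \<and> ev \<rho> \<tau>" if rR: "\<rho> \<in> R" for \<rho>
      proof -
        obtain r1 where r1: "r1 \<in> R1" "\<rho> = h r1" using rR R_def by blast
        obtain r where r: "r \<in> rest" "r1 = g r" using r1 R1_def by blast
        have a: "ev r1 \<sigma>"
        proof (cases "ev r \<sigma>")
          case True then show ?thesis using r by (simp add: g_def)
        next
          case False then show ?thesis using r ts by (simp add: g_def ev_mult1[OF fs])
        qed
        show ?thesis
        proof (cases "ev r1 \<tau>")
          case True then show ?thesis using r1 a by (simp add: h_def)
        next
          case False then show ?thesis using r1 a ss sT(3) by (simp add: h_def ev_mult1[OF fs] ev_mult1[OF ft])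
        qed
      qed
      have orthS: "ev \<rho> \<sigma> \<and> ev \<sigma> \<rho>" if rR: "\<rho> \<in> R" for \<rho>
      proof -
        have "pauli_commute \<rho> \<sigma>" using gcomm RG rR inG[OF sT(1)] by blast
        then show ?thesis using orth0[OF rR] unfolding commute_iff by blast
      qed
      have orthT: "ev \<rho> \<tau> \<and> ev \<tau> \<rho>" if rR: "\<rho> \<in> R" for \<rho>
      proof -
        have "pauli_commute \<rho> \<tau>" using gcomm RG rR inG[OF sT(2)] by blast
        then show ?thesis using orth0[OF rR] unfolding commute_iff by blast
      qed
      have T1G: "T1 \<subseteq> generate (pauli_group n) R"
        using T(7) generate.incl[of _ "T1 \<union> T2" "pauli_group n"] by blast
      have T2G: "T2 \<subseteq> generate (pauli_group n) R"
        using T(7) generate.incl[of _ "T1 \<union> T2" "pauli_group n"] by blast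
      have reg1: "regular (insert \<sigma> T1)" by (rule reg_extend[OF Rc T1G sc orthS T(5)])
      have reg2: "regular (insert \<tau> T2)" by (rule reg_extend[OF Rc T2G tc orthT T(6)])
      have "generate (pauli_group n) (insert \<sigma> T1 \<union> insert \<tau> T2)
          = generate (pauli_group n) (insert \<sigma> (insert \<tau> (T1 \<union> T2)))"
        by (simp add: insert_commute)
      also have "\<dots> = generate (pauli_group n) (insert \<sigma> (insert \<tau> R))"
      proof (rule gen_insert)
        show "generate (pauli_group n) (insert \<tau> (T1 \<union> T2)) = generate (pauli_group n) (insert \<tau> R)"
          by (rule gen_insert) (use T Rc tc in auto)
      qed (use T Rc sc tc in auto)
      also have "\<dots> = generate (pauli_group n) \<Theta>" using genR by simp
      finally show ?thesis using T reg1 reg2 sc tc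
        by (intro exI[of _ "insert \<sigma> T1"] exI[of _ "insert \<tau> T2"]) auto
    qed
  qed
qed


theorem lemma9:
  fixes n :: nat and \<Theta> :: "pauli set"
  assumes "\<Theta> \<subseteq> carrier (pauli_group n)"
    and "finite \<Theta>"
    and "\<forall>\<sigma>\<in>\<Theta>. \<forall>\<tau>\<in>\<Theta>. pauli_commute \<sigma> \<tau>"
  shows "\<exists>\<Theta>' \<Theta>''. \<Theta>' \<subseteq> carrier (pauli_group n) \<and> \<Theta>'' \<subseteq> carrier (pauli_group n)
           \<and> finite \<Theta>' \<and> finite \<Theta>'' \<and> regular \<Theta>' \<and> regular \<Theta>''
           \<and> generate (pauli_group n) (\<Theta>' \<union> \<Theta>'') = generate (pauli_group n) \<Theta>"
  using main_induct[of "card \<Theta>" n] assms by blast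

end
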